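(* The general solution to the geodesic equations on $\mathcal{F}_{1,2,3}$ with the metric $$ds^2=\frac{1}{\alpha}\left|\bar{u}_1\circ du_2\right|^2+\frac{1}{\beta}\,du_3\left(\mathrm{Id}-\bar{u}_3\otimes u_3\right)d\bar{u}_3 \;=\;\frac{1}{\alpha}\left|\bar{u}_1\circ du_2\right|^2+\frac{1}{\beta}\left(\left|\bar{u}_2\circ du_3\right|^2+\left|\bar{u}_1\circ du_3\right|^2\right)$$ has the form $$\begin{pmatrix} u_1(t)\\ u_2(t)\\ u_3(t)\end{pmatrix}=G(t)\exp\left[\begin{pmatrix}0 & \frac{1}{\alpha}A^0_{21} & \frac{1}{\beta}A^0_{31}\\ -\frac{1}{\alpha}\bar{A}^0_{21} & 0 & \frac{1}{\beta}A^0_{32}\\ -\frac{1}{\beta}\bar{A}^0_{31} & -\frac{1}{\beta}\bar{A}^0_{32} & 0\end{pmatrix}\beta t\right]\begin{pmatrix} u_1(0)\\ u_2(0)\\ u_3(0)\end{pmatrix},$$ where $$G(t)=\begin{pmatrix}\exp\left[\begin{pmatrix}0 & \frac{1}{\alpha}A^0_{21}\\ -\frac{1}{\alpha}\bar{A}^0_{21} & 0\end{pmatrix}(\alpha-\beta)t\right] & \\ & 1\end{pmatrix}$$ and $A^0_{21},A^0_{31},A^0_{32}$ are the initial data.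
   Context: A point of the complete flag manifold $\mathcal{F}_{1,2,3}=\mathrm{U}(3)/\mathrm{U}(1)^3$ is parametrized by an orthonormal triple of vectors $u_1,u_2,u_3\in\mathbb{C}^3$ ($\bar{u}_i\circ u_j:=\sum_k \bar{u}_i^k u_j^k=\delta_{ij}$), each defined up to a phase; $\alpha,\beta>0$ are real parameters. The geodesic problem is the free-particle problem with Lagrangian obtained from the metric by $du_i\to\dot u_i$, with gauge group $\mathrm{U}(1)^3$ acting by $u_i\to e^{i\varphi_i(t)}u_i$; the gauge is fixed by $\bar{u}_i\circ\dot{u}_i=0$, $i=1,2,3$. The notation is $A_{ij}(t):=\bar{u}_i\circ\dot{u}_j(t)$ (so $A_{ij}=-\bar{A}_{ji}$) and $A^0_{ij}:=\bar{u}_i\circ\dot{u}_j(0)$. *)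

theory Defs
  imports "HOL-Analysis.Analysis"
begin

text \<open>A point of the flag manifold is represented by the 3x3 complex matrix U whose
  rows are the vectors u1 = U$1, u2 = U$2, u3 = U$3 (components U$i$k, k ranging over
  the three elements of the index type 3; note (3::3) is the third index, distinct from 1 and 2).\<close>

definition cdot :: "complex^'n \<Rightarrow> complex^'n \<Rightarrow> complex" where
  "cdot x y = (\<Sum>k\<in>UNIV. cnj (x $ k) * y $ k)"

definition orthonormal_triple :: "complex^3^3 \<Rightarrow> bool" where
  "orthonormal_triple U \<longleftrightarrow> (\<forall>i j. cdot (U $ i) (U $ j) = (if i = j then 1 else 0))"

text \<open>Tangent vectors at U to the constraint manifold (kernel of the derivative of the
  orthonormality constraints).\<close>
definition tangent_vec :: "complex^3^3 \<Rightarrow> complex^3^3 \<Rightarrow> bool" where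
  "tangent_vec U X \<longleftrightarrow> (\<forall>i j. cdot (X $ i) (U $ j) + cdot (U $ i) (X $ j) = 0)"

text \<open>Lagrangian obtained from the metric by du_i -> dot u_i (V is the velocity).\<close>
definition lagr :: "real \<Rightarrow> real \<Rightarrow> complex^3^3 \<Rightarrow> complex^3^3 \<Rightarrow> real" where
  "lagr \<alpha> \<beta> U V = (1/\<alpha>) * (cmod (cdot (U $ 1) (V $ 2)))^2
      + (1/\<beta>) * ((cmod (cdot (U $ 2) (V $ 3)))^2 + (cmod (cdot (U $ 1) (V $ 3)))^2)"

definition dL_dV :: "real \<Rightarrow> real \<Rightarrow> complex^3^3 \<Rightarrow> complex^3^3 \<Rightarrow> complex^3^3 \<Rightarrow> real" where
  "dL_dV \<alpha> \<beta> U V X = deriv (\<lambda>e. lagr \<alpha> \<beta> U (V + e *\<^sub>R X)) 0"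

definition dL_dU :: "real \<Rightarrow> real \<Rightarrow> complex^3^3 \<Rightarrow> complex^3^3 \<Rightarrow> complex^3^3 \<Rightarrow> real" where
  "dL_dU \<alpha> \<beta> U V X = deriv (\<lambda>e. lagr \<alpha> \<beta> (U + e *\<^sub>R X) V) 0"

text \<open>Geodesic equations = Euler-Lagrange equations of the free particle constrained to the
  manifold of orthonormal triples (holonomic constraints): for every tangent vector X at U(t),
  d/dt (dL/dV (U,U') X) = dL/dU (U,U') X.\<close>
definition geodesic_eq :: "real \<Rightarrow> real \<Rightarrow> (real \<Rightarrow> complex^3^3) \<Rightarrow> bool" where
  "geodesic_eq \<alpha> \<beta> U \<longleftrightarrow>
     (\<forall>t. orthonormal_triple (U t)) \<and>
     (\<forall>t. U differentiable (at t)) \<and>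
     (\<forall>t X. tangent_vec (U t) X \<longrightarrow>
        ((\<lambda>s. dL_dV \<alpha> \<beta> (U s) (vector_derivative U (at s)) X) has_real_derivative
            dL_dU \<alpha> \<beta> (U t) (vector_derivative U (at t)) X) (at t))"

definition gauge_fixed :: "(real \<Rightarrow> complex^3^3) \<Rightarrow> bool" where
  "gauge_fixed U \<longleftrightarrow> (\<forall>t i. cdot (U t $ i) (vector_derivative U (at t) $ i) = 0)"

fun matpow :: "complex^'n^'n \<Rightarrow> nat \<Rightarrow> complex^'n^'n" where
  "matpow A 0 = mat 1"
| "matpow A (Suc k) = A ** matpow A k"

definition mat_exp :: "complex^'n^'n \<Rightarrow> complex^'n^'n" where
  "mat_exp A = (\<Sum>k. (1 / fact k) *\<^sub>R matpow A k)"

definition idx32 :: "3 \<Rightarrow> 2" where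
  "idx32 i = (if i = 1 then 1 else 2)"

definition blockdiag21 :: "complex^2^2 \<Rightarrow> complex^3^3" where
  "blockdiag21 E = (\<chi> i j. if i = 3 \<or> j = 3 then (if i = j then 1 else 0)
                            else E $ idx32 i $ idx32 j)"

definition mat2 :: "complex \<Rightarrow> complex \<Rightarrow> complex \<Rightarrow> complex \<Rightarrow> complex^2^2" where
  "mat2 a b c d = (\<chi> i j. if i = 1 then (if j = 1 then a else b) else (if j = 1 then c else d))"

definition mat3 :: "complex \<Rightarrow> complex \<Rightarrow> complex \<Rightarrow> complex \<Rightarrow> complex \<Rightarrow> complex
     \<Rightarrow> complex \<Rightarrow> complex \<Rightarrow> complex \<Rightarrow> complex^3^3" where
  "mat3 a11 a12 a13 a21 a22 a23 a31 a32 a33 = (\<chi> i j.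
     if i = 1 then (if j = 1 then a11 else if j = 2 then a12 else a13)
     else if i = 2 then (if j = 1 then a21 else if j = 2 then a22 else a23)
     else (if j = 1 then a31 else if j = 2 then a32 else a33))"

end

theory Submission
  imports Defs
begin

lemma vec_hvd:
  fixes f :: "real \<Rightarrow> 'a::real_normed_vector^'n"
  assumes "\<And>i. ((\<lambda>s. f s $ i) has_vector_derivative f' $ i) (at t)"
  shows "(f has_vector_derivative f') (at t)"
proof -
  have "((\<lambda>y. ((f y - f t) - (y - t) *\<^sub>R f') /\<^sub>R norm (y - t)) \<longlongrightarrow> 0) (at t)"
  proof (rule vec_tendstoI)
    fix i
    have "((\<lambda>y. ((f y $ i - f t $ i) - (y - t) *\<^sub>R f' $ i) /\<^sub>R norm (y - t)) \<longlongrightarrow> 0) (at t)"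
      using assms[of i] unfolding has_vector_derivative_def has_derivative_at_within by simp
    then show "((\<lambda>y. (((f y - f t) - (y - t) *\<^sub>R f') /\<^sub>R norm (y - t)) $ i) \<longlongrightarrow> 0 $ i) (at t)"
      by simp
  qed
  then show ?thesis
    unfolding has_vector_derivative_def has_derivative_at_within
    by (simp add: bounded_linear_scaleR_left)
qed

lemma mat_hvd:
  fixes f :: "real \<Rightarrow> 'a::real_normed_vector^'n^'m"
  assumes "\<And>i j. ((\<lambda>s. f s $ i $ j) has_vector_derivative f' $ i $ j) (at t)"
  shows "(f has_vector_derivative f') (at t)"
  by (intro vec_hvd assms)


lemma norm_le_sum_nth: "norm (x::'a::real_normed_vector^'n) \<le> (\<Sum>i\<in>UNIV. norm (x $ i))"
  unfolding norm_vec_def by (rule L2_set_le_sum) auto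

lemma matmul_entry_bound:
  fixes A B :: "complex^'n^'n"
  shows "norm ((A ** B) $ i $ j) \<le> real CARD('n) * (norm A * norm B)"
proof -
  have "norm ((A ** B) $ i $ j) = norm (\<Sum>k\<in>UNIV. A$i$k * B$k$j)"
    by (simp add: matrix_matrix_mult_def)
  also have "\<dots> \<le> (\<Sum>k\<in>UNIV. norm (A$i$k * B$k$j))" by (rule norm_sum)
  also have "\<dots> \<le> (\<Sum>k\<in>(UNIV::'n set). norm A * norm B)"
  proof (rule sum_mono)
    fix k
    have a: "norm (A$i$k) \<le> norm A" using Finite_Cartesian_Product.norm_nth_le[of "A$i" k] Finite_Cartesian_Product.norm_nth_le[of A i] by linarith
    have b: "norm (B$k$j) \<le> norm B" using Finite_Cartesian_Product.norm_nth_le[of "B$k" j] Finite_Cartesian_Product.norm_nth_le[of B k] by linarith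
    show "norm (A$i$k * B$k$j) \<le> norm A * norm B"
      unfolding norm_mult by (rule mult_mono[OF a b]) auto
  qed
  also have "\<dots> = real CARD('n) * (norm A * norm B)" by simp
  finally show ?thesis .
qed

lemma matmul_norm:
  fixes A B :: "complex^'n^'n"
  shows "norm (A ** B) \<le> real CARD('n)^3 * norm A * norm B"
proof -
  have "norm (A ** B) \<le> (\<Sum>i\<in>UNIV. norm ((A**B) $ i))" by (rule norm_le_sum_nth)
  also have "\<dots> \<le> (\<Sum>i\<in>(UNIV::'n set). \<Sum>j\<in>(UNIV::'n set). real CARD('n) * (norm A * norm B))"
    by (intro sum_mono order.trans[OF norm_le_sum_nth] matmul_entry_bound)
  also have "\<dots> = real CARD('n)^3 * norm A * norm B" by (simp add: power3_eq_cube)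
  finally show ?thesis .
qed

lemma matpow_norm:
  fixes A :: "complex^'n^'n"
  shows "norm (matpow A k) \<le> norm (mat 1 :: complex^'n^'n) * (real CARD('n)^3 * norm A)^k"
proof (induction k)
  case 0 then show ?case by simp
next
  case (Suc k)
  have "norm (matpow A (Suc k)) \<le> real CARD('n)^3 * norm A * norm (matpow A k)"
    by (simp add: matmul_norm)
  also have "\<dots> \<le> real CARD('n)^3 * norm A * (norm (mat 1 :: complex^'n^'n) * (real CARD('n)^3 * norm A)^k)"
    by (intro mult_left_mono Suc) auto
  finally show ?case by (simp add: ac_simps)
qed

lemma matpow_scaleR: "matpow ((t::real) *\<^sub>R (N::complex^'n^'n)) k = (t^k) *\<^sub>R matpow N k"
proof (induction k)
  case 0 then show ?case by simp
next
  case (Suc k)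
  show ?case
    by (simp add: Suc vec_eq_iff matrix_matrix_mult_def scaleR_sum_right mult.commute)
qed

lemma mat_exp_summable: "summable (\<lambda>k. (1 / fact k) *\<^sub>R matpow (A::complex^'n^'n) k)"
proof (rule summable_norm_cancel, rule summable_comparison_test)
  define c where "c = real CARD('n)^3 * norm A"
  show "\<exists>N. \<forall>n\<ge>N. norm (norm ((1 / fact n) *\<^sub>R matpow A n)) \<le> norm (mat 1 :: complex^'n^'n) * (inverse (fact n) * c^n)"
    using matpow_norm[of A] by (auto simp: c_def divide_simps)
  show "summable (\<lambda>n. norm (mat 1 :: complex^'n^'n) * (inverse (fact n) * c^n))"
    by (intro summable_mult summable_exp)
qed

lemma mat_exp_entry:
  "mat_exp (A::complex^'n^'n) $ i $ j = (\<Sum>k. matpow A k $ i $ j / fact k)"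
proof -
  have bl: "bounded_linear (\<lambda>x::complex^'n^'n. x $ i $ j)"
    using bounded_linear_compose[OF bounded_linear_vec_nth bounded_linear_vec_nth] by blast
  have "(\<lambda>k. ((1 / fact k) *\<^sub>R matpow A k) $ i $ j) sums (mat_exp A $ i $ j)"
    unfolding mat_exp_def by (rule bounded_linear.sums[OF bl summable_sums[OF mat_exp_summable]])
  then have "(\<lambda>k. (1 / fact k) *\<^sub>R (matpow A k $ i $ j)) sums (mat_exp A $ i $ j)"
    unfolding vector_scaleR_component .
  then show ?thesis by (simp add: sums_iff scaleR_conv_of_real divide_inverse ac_simps)
qed

lemma entry_powser_summable:
  "summable (\<lambda>k. (matpow (N::complex^'n^'n) k $ i $ j / fact k) * (y::complex) ^ k)"
proof (rule summable_norm_cancel, rule summable_comparison_test)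
  define c where "c = real CARD('n)^3 * norm N * norm y"
  show "\<exists>M. \<forall>n\<ge>M. norm (norm ((matpow N n $ i $ j / fact n) * y ^ n)) \<le> norm (mat 1 :: complex^'n^'n) * (inverse (fact n) * c^n)"
  proof (intro exI allI impI)
    fix n :: nat
    have e: "norm (matpow N n $ i $ j) \<le> norm (matpow N n)"
      using Finite_Cartesian_Product.norm_nth_le[of "matpow N n $ i" j] Finite_Cartesian_Product.norm_nth_le[of "matpow N n" i] by linarith
    have "norm ((matpow N n $ i $ j / fact n) * y ^ n) = norm (matpow N n $ i $ j) * norm y ^ n / fact n"
      by (simp add: norm_mult norm_divide norm_power)
    also have "\<dots> \<le> norm (mat 1 :: complex^'n^'n) * (real CARD('n)^3 * norm N)^n * norm y ^ n / fact n"
      by (intro divide_right_mono mult_right_mono order.trans[OF e matpow_norm]) auto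
    also have "\<dots> = norm (mat 1 :: complex^'n^'n) * (inverse (fact n) * c^n)"
      by (simp add: c_def power_mult_distrib divide_simps)
    finally show "norm (norm ((matpow N n $ i $ j / fact n) * y ^ n)) \<le> norm (mat 1 :: complex^'n^'n) * (inverse (fact n) * c^n)"
      by simp
  qed
  show "summable (\<lambda>n. norm (mat 1 :: complex^'n^'n) * (inverse (fact n) * c^n))"
    by (intro summable_mult summable_exp)
qed

lemma mat_exp_scaled_entry:
  "mat_exp ((t::real) *\<^sub>R (N::complex^'n^'n)) $ i $ j = (\<Sum>k. (matpow N k $ i $ j / fact k) * of_real t ^ k)"
  unfolding mat_exp_entry matpow_scaleR vector_scaleR_component
  by (simp add: scaleR_conv_of_real ac_simps)

lemma mat_exp_deriv:
  fixes N :: "complex^'n^'n"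
  shows "((\<lambda>t. mat_exp (t *\<^sub>R N)) has_vector_derivative N ** mat_exp (t *\<^sub>R N)) (at t)"
proof (rule mat_hvd)
  fix i j
  define c where "c = (\<lambda>l k. matpow N k $ l $ j / fact k)"
  have sm: "\<And>l y. summable (\<lambda>k. c l k * y ^ k)" unfolding c_def by (rule entry_powser_summable)
  have d: "((\<lambda>z. \<Sum>k. c i k * z^k) has_field_derivative (\<Sum>k. diffs (c i) k * z^k)) (at z)" for z
    by (rule termdiffs_strong_converges_everywhere[OF sm])
  have nz: "(1::complex) + of_nat k \<noteq> 0" for k
    by (metis of_nat_Suc Suc_neq_Zero of_nat_eq_0_iff add.commute)
  have "diffs (c i) k = (\<Sum>l\<in>UNIV. N $ i $ l * c l k)" for k
    using nz[of k] by (simp add: diffs_def c_def matrix_matrix_mult_def fact_Suc divide_simps sum_distrib_left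
        sum_divide_distrib of_nat_mult ac_simps) 
  then have "(\<Sum>k. diffs (c i) k * z^k) = (\<Sum>k. \<Sum>l\<in>UNIV. N $ i $ l * (c l k * z^k))" for z
    by (simp add: sum_distrib_right sum_distrib_left ac_simps)
  also have "\<dots> z = (\<Sum>l\<in>UNIV. \<Sum>k. N $ i $ l * (c l k * z^k))" for z
    by (rule suminf_sum) (intro summable_mult sm)
  also have "\<dots> z = (\<Sum>l\<in>UNIV. N $ i $ l * (\<Sum>k. c l k * z^k))" for z
    by (intro sum.cong refl suminf_mult sm)
  finally have eq: "(\<Sum>k. diffs (c i) k * z^k) = (\<Sum>l\<in>UNIV. N $ i $ l * (\<Sum>k. c l k * z^k))" for z .
  have "((\<lambda>t. (\<Sum>k. c i k * of_real t ^ k)) has_vector_derivative (\<Sum>k. diffs (c i) k * of_real t ^ k)) (at t)"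
    by (rule has_vector_derivative_real_field[OF d])
  then show "((\<lambda>s. mat_exp (s *\<^sub>R N) $ i $ j) has_vector_derivative (N ** mat_exp (t *\<^sub>R N)) $ i $ j) (at t)"
    unfolding eq by (simp add: mat_exp_scaled_entry c_def matrix_matrix_mult_def)
qed

lemma mat_exp_zero: "mat_exp (0::complex^'n^'n) = mat 1"
proof -
  have "(\<lambda>k. (1 / fact k) *\<^sub>R matpow (0::complex^'n^'n) k) = (\<lambda>k. if k = 0 then mat 1 else 0)"
  proof
    fix k show "(1 / fact k) *\<^sub>R matpow (0::complex^'n^'n) k = (if k = 0 then mat 1 else 0)"
      by (cases k) (auto simp: vec_eq_iff matrix_matrix_mult_def)
  qed
  moreover have "(\<lambda>k::nat. if k = 0 then mat 1 else (0::complex^'n^'n)) sums mat 1"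
    using sums_single[of 0 "\<lambda>_. mat 1 :: complex^'n^'n"] by simp
  ultimately show ?thesis unfolding mat_exp_def by (simp add: sums_iff)
qed




definition adj :: "complex^'n^'n \<Rightarrow> complex^'n^'n" where
  "adj X = (\<chi> i j. cnj (X $ j $ i))"

lemma adj_nth[simp]: "adj X $ i $ j = cnj (X $ j $ i)" by (simp add: adj_def)

lemma adj_mult: "adj (A ** B) = adj B ** (adj A :: complex^'n^'n)"
  by (simp add: vec_eq_iff matrix_matrix_mult_def mult.commute)

lemma adj_adj[simp]: "adj (adj A) = A" by (simp add: vec_eq_iff)
lemma adj_add: "adj (A + B) = adj A + adj B" by (simp add: vec_eq_iff)
lemma adj_diff: "adj (A - B) = adj A - adj B" by (simp add: vec_eq_iff)
lemma adj_minus: "adj (- A) = - adj A" by (simp add: vec_eq_iff)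
lemma adj_scaleR: "adj (c *\<^sub>R A) = c *\<^sub>R adj A" by (simp add: vec_eq_iff)
lemma adj_mat1[simp]: "adj (mat 1 :: complex^'n^'n) = mat 1" by (simp add: vec_eq_iff mat_def)
lemma adj_zero[simp]: "adj 0 = 0" by (simp add: vec_eq_iff)

lemma mm_add_r: "((A::'a::semiring_1^'n^'n) + B) ** C = A ** C + B ** C"
  by (simp add: vec_eq_iff matrix_matrix_mult_def distrib_right sum.distrib)
lemma mm_add_l: "(C::'a::semiring_1^'n^'n) ** (A + B) = C ** A + C ** B"
  by (simp add: matrix_add_ldistrib)
lemma mm_diff_r: "((A::'a::ring_1^'n^'n) - B) ** C = A ** C - B ** C"
  by (simp add: vec_eq_iff matrix_matrix_mult_def left_diff_distrib sum_subtractf)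
lemma mm_diff_l: "(C::'a::ring_1^'n^'n) ** (A - B) = C ** A - C ** B"
  by (simp add: vec_eq_iff matrix_matrix_mult_def right_diff_distrib sum_subtractf)
lemma mm_minus_r: "(- (A::'a::ring_1^'n^'n)) ** C = - (A ** C)"
  by (simp add: vec_eq_iff matrix_matrix_mult_def sum_negf)
lemma mm_minus_l: "(C::'a::ring_1^'n^'n) ** (- A) = - (C ** A)"
  by (simp add: vec_eq_iff matrix_matrix_mult_def sum_negf)
lemma mm_scaleR_r: "((c::real) *\<^sub>R (A::complex^'n^'n)) ** C = c *\<^sub>R (A ** C)"
  by (simp add: vec_eq_iff matrix_matrix_mult_def scaleR_sum_right)
lemma mm_scaleR_l: "(C::complex^'n^'n) ** ((c::real) *\<^sub>R A) = c *\<^sub>R (C ** A)"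
  by (simp add: vec_eq_iff matrix_matrix_mult_def scaleR_sum_right)
lemma mm_zero_l[simp]: "(0::'a::semiring_1^'n^'n) ** A = 0"
  by (simp add: vec_eq_iff matrix_matrix_mult_def)
lemma mm_zero_r[simp]: "(A::'a::semiring_1^'n^'n) ** 0 = 0"
  by (simp add: vec_eq_iff matrix_matrix_mult_def)

lemmas mm_simps = mm_add_r mm_add_l mm_diff_r mm_diff_l mm_minus_r mm_minus_l mm_scaleR_r mm_scaleR_l
  adj_mult adj_add adj_diff adj_minus adj_scaleR

lemma hvd_nth:
  fixes f :: "real \<Rightarrow> 'a::real_normed_vector^'n"
  assumes "(f has_vector_derivative f') (at t)"
  shows "((\<lambda>s. f s $ i) has_vector_derivative f' $ i) (at t)"
proof -
  have "((\<lambda>s. f s $ i) has_derivative (\<lambda>x. (x *\<^sub>R f') $ i)) (at t)"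
    using bounded_linear.has_derivative[OF bounded_linear_vec_nth assms[unfolded has_vector_derivative_def]] .
  then show ?thesis unfolding has_vector_derivative_def by simp
qed

lemma hvd_nth2:
  fixes f :: "real \<Rightarrow> 'a::real_normed_vector^'n^'m"
  assumes "(f has_vector_derivative f') (at t)"
  shows "((\<lambda>s. f s $ i $ j) has_vector_derivative f' $ i $ j) (at t)"
  by (intro hvd_nth assms)

lemma hvd_matmul:
  fixes F H :: "real \<Rightarrow> complex^'n^'n"
  assumes "(F has_vector_derivative F') (at t)" "(H has_vector_derivative H') (at t)"
  shows "((\<lambda>s. F s ** H s) has_vector_derivative (F' ** H t + F t ** H')) (at t)"
proof (rule mat_hvd)
  fix i j
  have "((\<lambda>s. \<Sum>k\<in>UNIV. F s $ i $ k * H s $ k $ j) has_vector_derivative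
      (\<Sum>k\<in>UNIV. F t $ i $ k * H' $ k $ j + F' $ i $ k * H t $ k $ j)) (at t)"
    by (intro has_vector_derivative_sum has_vector_derivative_mult hvd_nth2 assms)
  then show "((\<lambda>s. (F s ** H s) $ i $ j) has_vector_derivative (F' ** H t + F t ** H') $ i $ j) (at t)"
    by (simp add: matrix_matrix_mult_def sum.distrib add.commute)
qed

lemma hvd_adj:
  fixes F :: "real \<Rightarrow> complex^'n^'n"
  assumes "(F has_vector_derivative F') (at t)"
  shows "((\<lambda>s. adj (F s)) has_vector_derivative adj F') (at t)"
  by (rule mat_hvd) (simp add: has_vector_derivative_cnj hvd_nth2 assms)

lemma hvd_const_mat: "((\<lambda>s. (C::complex^'n^'n)) has_vector_derivative 0) (at t)"
  by (rule has_vector_derivative_const)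

lemma deriv0_const:
  fixes f :: "real \<Rightarrow> 'a::real_normed_vector"
  assumes "\<And>t. (f has_vector_derivative 0) (at t)"
  shows "f t = f s"
proof -
  have "\<exists>c. \<forall>x\<in>UNIV. f x = c"
    by (rule has_derivative_zero_constant[of UNIV f]) 
       (use assms in \<open>auto simp: has_vector_derivative_def\<close>)
  then show ?thesis by auto
qed

lemma mat_exp_deriv':
  fixes N :: "complex^'n^'n"
  shows "((\<lambda>t. mat_exp ((c * t) *\<^sub>R N)) has_vector_derivative (c *\<^sub>R N) ** mat_exp ((c * t) *\<^sub>R N)) (at t)"
proof -
  have e: "(c * t) *\<^sub>R N = t *\<^sub>R (c *\<^sub>R N)" for t by simp
  show ?thesis unfolding e by (rule mat_exp_deriv)
qed



lemma cdot_add_r: "cdot x (y + z) = cdot x y + cdot x z"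
  by (simp add: cdot_def distrib_left sum.distrib)
lemma cdot_add_l: "cdot (x + z) y = cdot x y + cdot z y"
  by (simp add: cdot_def distrib_right sum.distrib)
lemma cdot_diff_r: "cdot x (y - z) = cdot x y - cdot x z"
  by (simp add: cdot_def right_diff_distrib sum_subtractf)
lemma cdot_diff_l: "cdot (x - z) y = cdot x y - cdot z y"
  by (simp add: cdot_def left_diff_distrib sum_subtractf)
lemma cdot_scaleR_r: "cdot x ((e::real) *\<^sub>R z) = of_real e * cdot x z"
  unfolding cdot_def vector_scaleR_component by (simp add: sum_distrib_left scaleR_conv_of_real ac_simps)
lemma cdot_scaleR_l: "cdot ((e::real) *\<^sub>R z) y = of_real e * cdot z y"
  unfolding cdot_def vector_scaleR_component by (simp add: sum_distrib_left scaleR_conv_of_real ac_simps)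
lemma cdot_zero_r[simp]: "cdot x 0 = 0" by (simp add: cdot_def)
lemma cdot_zero_l[simp]: "cdot 0 x = 0" by (simp add: cdot_def)
lemma cdot_cnj: "cnj (cdot x y) = cdot y x"
  by (simp add: cdot_def mult.commute)

lemma cmod_sq_expand:
  "(cmod (a + of_real e * b))^2 = (cmod a)^2 + 2 * e * Re (cnj a * b) + e^2 * (cmod b)^2"
  unfolding cmod_power2 by (simp add: power2_eq_square algebra_simps)

lemma sq_deriv:
  "((\<lambda>e. (cmod (a + of_real e * b))^2) has_real_derivative 2 * Re (cnj a * b)) (at 0)"
proof -
  have "((\<lambda>e. (cmod a)^2 + 2 * e * Re (cnj a * b) + e^2 * (cmod b)^2) has_real_derivative
          2 * Re (cnj a * b)) (at 0)"
    by (auto intro!: derivative_eq_intros)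
  then show ?thesis unfolding cmod_sq_expand by simp
qed

definition dV :: "real \<Rightarrow> real \<Rightarrow> complex^3^3 \<Rightarrow> complex^3^3 \<Rightarrow> complex^3^3 \<Rightarrow> real" where
  "dV \<alpha> \<beta> U V X = (2/\<alpha>) * Re (cnj (cdot (U$1) (V$2)) * cdot (U$1) (X$2))
     + (2/\<beta>) * (Re (cnj (cdot (U$2) (V$3)) * cdot (U$2) (X$3)) + Re (cnj (cdot (U$1) (V$3)) * cdot (U$1) (X$3)))"

definition dU :: "real \<Rightarrow> real \<Rightarrow> complex^3^3 \<Rightarrow> complex^3^3 \<Rightarrow> complex^3^3 \<Rightarrow> real" where
  "dU \<alpha> \<beta> U V X = (2/\<alpha>) * Re (cnj (cdot (U$1) (V$2)) * cdot (X$1) (V$2))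
     + (2/\<beta>) * (Re (cnj (cdot (U$2) (V$3)) * cdot (X$2) (V$3)) + Re (cnj (cdot (U$1) (V$3)) * cdot (X$1) (V$3)))"

lemma dL_dV_eq: "dL_dV \<alpha> \<beta> U V X = dV \<alpha> \<beta> U V X"
proof -
  have "((\<lambda>e. lagr \<alpha> \<beta> U (V + e *\<^sub>R X)) has_real_derivative dV \<alpha> \<beta> U V X) (at 0)"
  proof -
    have "((\<lambda>e. (1/\<alpha>) * (cmod (cdot (U$1) (V$2) + of_real e * cdot (U$1) (X$2)))^2
      + (1/\<beta>) * ((cmod (cdot (U$2) (V$3) + of_real e * cdot (U$2) (X$3)))^2
                  + (cmod (cdot (U$1) (V$3) + of_real e * cdot (U$1) (X$3)))^2)) has_real_derivative
      (1/\<alpha>) * (2 * Re (cnj (cdot (U$1) (V$2)) * cdot (U$1) (X$2)))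
      + (1/\<beta>) * (2 * Re (cnj (cdot (U$2) (V$3)) * cdot (U$2) (X$3)) + 2 * Re (cnj (cdot (U$1) (V$3)) * cdot (U$1) (X$3)))) (at 0)"
      by (intro DERIV_add DERIV_cmult sq_deriv)
    then show ?thesis
      by (simp add: lagr_def dV_def cdot_add_r cdot_scaleR_r algebra_simps)
  qed
  then show ?thesis unfolding dL_dV_def by (rule DERIV_imp_deriv)
qed

lemma dL_dU_eq: "dL_dU \<alpha> \<beta> U V X = dU \<alpha> \<beta> U V X"
proof -
  have "((\<lambda>e. lagr \<alpha> \<beta> (U + e *\<^sub>R X) V) has_real_derivative dU \<alpha> \<beta> U V X) (at 0)"
  proof -
    have "((\<lambda>e. (1/\<alpha>) * (cmod (cdot (U$1) (V$2) + of_real e * cdot (X$1) (V$2)))^2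
      + (1/\<beta>) * ((cmod (cdot (U$2) (V$3) + of_real e * cdot (X$2) (V$3)))^2
                  + (cmod (cdot (U$1) (V$3) + of_real e * cdot (X$1) (V$3)))^2)) has_real_derivative
      (1/\<alpha>) * (2 * Re (cnj (cdot (U$1) (V$2)) * cdot (X$1) (V$2)))
      + (1/\<beta>) * (2 * Re (cnj (cdot (U$2) (V$3)) * cdot (X$2) (V$3)) + 2 * Re (cnj (cdot (U$1) (V$3)) * cdot (X$1) (V$3)))) (at 0)"
      by (intro DERIV_add DERIV_cmult sq_deriv)
    then show ?thesis
      by (simp add: lagr_def dU_def cdot_add_l cdot_scaleR_l algebra_simps)
  qed
  then show ?thesis unfolding dL_dU_def by (rule DERIV_imp_deriv)
qed


lemma hvd_cdot:
  fixes x y :: "real \<Rightarrow> complex^'n"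
  assumes "(x has_vector_derivative x') (at t)" "(y has_vector_derivative y') (at t)"
  shows "((\<lambda>s. cdot (x s) (y s)) has_vector_derivative (cdot x' (y t) + cdot (x t) y')) (at t)"
proof -
  have "((\<lambda>s. \<Sum>k\<in>UNIV. cnj (x s $ k) * y s $ k) has_vector_derivative
          (\<Sum>k\<in>UNIV. cnj (x t $ k) * y' $ k + cnj (x' $ k) * y t $ k)) (at t)"
    by (intro has_vector_derivative_sum has_vector_derivative_mult has_vector_derivative_cnj hvd_nth assms)
  then show ?thesis unfolding cdot_def by (simp add: sum.distrib add.commute)
qed

lemma orth_unit: "orthonormal_triple W \<Longrightarrow> W ** adj W = mat 1"
  unfolding orthonormal_triple_def
  by (auto simp: vec_eq_iff matrix_matrix_mult_def mat_def cdot_def mult.commute)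

lemma orth_unit2: "orthonormal_triple W \<Longrightarrow> adj W ** W = mat 1"
  using orth_unit matrix_left_right_inverse by blast

lemma orthD: "orthonormal_triple W \<Longrightarrow> cdot (W$i) (W$j) = (if i = j then 1 else 0)"
  unfolding orthonormal_triple_def by blast

lemma cdot_mm_r: "cdot x ((S ** A) $ j) = (\<Sum>k\<in>UNIV. S$j$k * cdot x (A$k))"
  by (simp add: cdot_def matrix_matrix_mult_def sum_distrib_left sum_distrib_right ac_simps)
     (rule sum.swap)

lemma cdot_mm_l: "cdot ((S ** A) $ i) y = (\<Sum>k\<in>UNIV. cnj (S$i$k) * cdot (A$k) y)"
  by (simp add: cdot_def matrix_matrix_mult_def sum_distrib_left sum_distrib_right ac_simps)
     (rule sum.swap)

lemma cdot_right_mm: "cdot (A $ i) ((A ** \<Omega>) $ j) = (A ** \<Omega> ** adj A) $ j $ i"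
  by (simp add: cdot_def matrix_matrix_mult_def sum_distrib_left sum_distrib_right ac_simps)

lemma cdot_omega_anti:
  assumes "adj \<Omega> = - \<Omega>"
  shows "cdot ((A ** \<Omega>) $ i) (B $ j) = - cdot (A $ i) ((B ** \<Omega>) $ j)"
proof -
  have o: "cnj (\<Omega> $ l $ k) = - \<Omega> $ k $ l" for k l
    using arg_cong[OF assms, of "\<lambda>M. M $ k $ l"] by simp
  have "cdot ((A ** \<Omega>) $ i) (B $ j) = (\<Sum>k\<in>UNIV. \<Sum>l\<in>UNIV. cnj (A$i$l) * cnj (\<Omega>$l$k) * B$j$k)"
    by (simp add: cdot_def matrix_matrix_mult_def sum_distrib_left sum_distrib_right ac_simps)
  also have "\<dots> = - (\<Sum>k\<in>UNIV. \<Sum>l\<in>UNIV. cnj (A$i$l) * (B$j$k * \<Omega>$k$l))"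
    by (simp add: o sum_negf[symmetric] ac_simps)
  also have "\<dots> = - cdot (A $ i) ((B ** \<Omega>) $ j)"
    by (simp add: cdot_def matrix_matrix_mult_def sum_distrib_left sum_distrib_right ac_simps)
       (rule sum.swap)
  finally show ?thesis .
qed

lemma tangent_S:
  assumes "orthonormal_triple W" "adj S = - S"
  shows "tangent_vec W (S ** W)"
proof -
  have o: "cnj (S $ l $ k) = - S $ k $ l" for k l
    using arg_cong[OF assms(2), of "\<lambda>M. M $ k $ l"] by simp
  show ?thesis unfolding tangent_vec_def
    by (simp add: cdot_mm_l cdot_mm_r orthD[OF assms(1)] o if_distrib cong: if_cong)
qed

lemma tangent_Omega:
  assumes "adj \<Omega> = - \<Omega>"
  shows "tangent_vec W (W ** \<Omega>)"
  unfolding tangent_vec_def by (simp add: cdot_omega_anti[OF assms])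


lemma cont_from_Re:
  fixes g :: "real \<Rightarrow> complex"
  assumes "isCont (\<lambda>s. Re (g s)) t" "isCont (\<lambda>s. Re (\<i> * g s)) t"
  shows "isCont g t"
proof -
  have e: "g = (\<lambda>s. of_real (Re (g s)) - \<i> * of_real (Re (\<i> * g s)))"
    by (rule ext) (simp add: complex_eq_iff)
  show ?thesis by (subst e) (intro continuous_intros assms)
qed

definition Sm :: "3 \<Rightarrow> 3 \<Rightarrow> complex \<Rightarrow> complex^3^3" where
  "Sm p q z = (\<chi> i j. if i = p \<and> j = q then z else if i = q \<and> j = p then - cnj z else 0)"

lemma Sm_anti: "p \<noteq> q \<Longrightarrow> adj (Sm p q z) = - Sm p q z"
  by (auto simp: vec_eq_iff Sm_def)

lemma cont_div_transform:
  fixes f n d :: "real \<Rightarrow> complex"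
  assumes "isCont n t" "isCont d t" "d t = 1" "\<And>s. cnj (f s) * d s = n s"
  shows "isCont f t"
proof -
  have ev: "\<forall>\<^sub>F s in at t. d s \<noteq> 0"
    using assms(2,3) unfolding isCont_def by (intro tendsto_imp_eventually_ne) auto
  have c: "isCont (\<lambda>s. cnj (n s / d s)) t"
    using assms(1,2,3) by (intro continuous_intros) auto
  have "\<forall>\<^sub>F s in at t. cnj (n s / d s) = f s"
    using ev by eventually_elim (simp add: assms(4)[symmetric])
  moreover have "n t = cnj (f t)" using assms(3) assms(4)[of t] by simp
  then have "cnj (n t / d t) = f t" using assms(3) by simp
  ultimately have "\<forall>\<^sub>F s in at t. cnj (n s / d s) = f s" "((\<lambda>s. cnj (n s / d s)) \<longlongrightarrow> f t) (at t)"
    using c unfolding isCont_def by auto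
  then show ?thesis unfolding isCont_def by (rule Lim_transform_eventually[rotated])
qed

locale geo =
  fixes \<alpha> \<beta> :: real and U :: "real \<Rightarrow> complex^3^3"
  assumes apos: "\<alpha> > 0" and bpos: "\<beta> > 0"
    and geo: "geodesic_eq \<alpha> \<beta> U"
    and gauge: "gauge_fixed U"
begin

definition V where "V s = vector_derivative U (at s)"
definition a where "a s i j = cdot (U s $ i) (V s $ j)"
definition K where "K s = (\<chi> j i. a s i j)"

lemma orth: "orthonormal_triple (U s)"
  using geo unfolding geodesic_eq_def by blast

lemma hvd: "(U has_vector_derivative V s) (at s)"
  using geo unfolding geodesic_eq_def V_def by (simp add: vector_derivative_works[symmetric])

lemma EL: "tangent_vec (U t) X \<Longrightarrow>
  ((\<lambda>s. dV \<alpha> \<beta> (U s) (V s) X) has_real_derivative dU \<alpha> \<beta> (U t) (V t) X) (at t)"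
  using geo unfolding geodesic_eq_def V_def dL_dV_eq dL_dU_eq by blast

lemma gaugeV: "a s i i = 0"
  using gauge unfolding gauge_fixed_def a_def V_def by blast

lemma unit1: "U s ** adj (U s) = mat 1" by (rule orth_unit[OF orth])
lemma unit2: "adj (U s) ** U s = mat 1" by (rule orth_unit2[OF orth])

lemma a_anti: "a s i j = - cnj (a s j i)"
proof -
  have "((\<lambda>s. cdot (U s $ i) (U s $ j)) has_vector_derivative
          (cdot (V s $ i) (U s $ j) + cdot (U s $ i) (V s $ j))) (at s)"
    by (intro hvd_cdot hvd_nth hvd)
  moreover have "(\<lambda>s. cdot (U s $ i) (U s $ j)) = (\<lambda>s. if i = j then 1 else 0)"
    using orthD[OF orth] by auto
  ultimately have "((\<lambda>s. if i = j then 1 else 0 :: complex) has_vector_derivative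
          (cdot (V s $ i) (U s $ j) + cdot (U s $ i) (V s $ j))) (at s)" by simp
  then have "cdot (V s $ i) (U s $ j) + cdot (U s $ i) (V s $ j) = 0"
    using vector_derivative_unique_at[OF _ has_vector_derivative_const] by blast
  then show ?thesis unfolding a_def using cdot_cnj[of "V s $ i" "U s $ j"]
    by (metis add_eq_0_iff complex_cnj_cnj)
qed

lemma V_eq: "V s = K s ** U s"
proof -
  have "(K s ** U s) $ j $ l = V s $ j $ l" for j l
  proof -
    have "(K s ** U s) $ j $ l = (\<Sum>i\<in>UNIV. (\<Sum>k\<in>UNIV. cnj (U s $ i $ k) * V s $ j $ k) * U s $ i $ l)"
      by (simp add: K_def a_def cdot_def matrix_matrix_mult_def)
    also have "\<dots> = (\<Sum>k\<in>UNIV. V s $ j $ k * (adj (U s) ** U s) $ k $ l)"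
      by (simp add: matrix_matrix_mult_def sum_distrib_left sum_distrib_right ac_simps)
         (rule sum.swap)
    also have "\<dots> = (\<Sum>k\<in>UNIV. if k = l then V s $ j $ k else 0)"
      by (rule sum.cong) (auto simp: unit2 mat_def)
    also have "\<dots> = V s $ j $ l" by simp
    finally show ?thesis .
  qed
  then show ?thesis by (simp only: vec_eq_iff) metis
qed

lemma a_anti': "cnj (a s i j) = - a s j i"
  using a_anti[of s j i] by simp

lemma K_anti: "adj (K s) = - K s"
  by (simp add: vec_eq_iff K_def a_anti')

lemma U_cont: "isCont U t"
  using hvd has_vector_derivative_continuous by blast

definition r where "r t s i k = cdot (U s $ i) (U t $ k)"

lemma r_cont: "isCont (\<lambda>s. r t s i k) t"
  unfolding r_def cdot_def by (intro continuous_intros isCont_vec_nth U_cont)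

lemma r_at: "r t t i k = (if i = k then 1 else 0)"
  unfolding r_def using orthD[OF orth] by simp

lemma ell_cont: "p \<noteq> q \<Longrightarrow> isCont (\<lambda>s. dV \<alpha> \<beta> (U s) (V s) (Sm p q z ** U t)) t"
  by (rule DERIV_isCont[OF EL[OF tangent_S[OF orth Sm_anti]]])

lemma ell_eval: "dV \<alpha> \<beta> (U s) (V s) (Sm p q z ** U t) =
   (2/\<alpha>) * Re (cnj (a s 1 2) * (\<Sum>k\<in>UNIV. Sm p q z $ 2 $ k * r t s 1 k))
     + (2/\<beta>) * (Re (cnj (a s 2 3) * (\<Sum>k\<in>UNIV. Sm p q z $ 3 $ k * r t s 2 k))
                + Re (cnj (a s 1 3) * (\<Sum>k\<in>UNIV. Sm p q z $ 3 $ k * r t s 1 k)))"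
  by (simp only: dV_def a_def r_def cdot_mm_r)

end

context geo begin

lemma ev21: "dV \<alpha> \<beta> (U s) (V s) (Sm 2 1 z ** U t) = (2/\<alpha>) * Re (z * (cnj (a s 1 2) * r t s 1 1))"
  unfolding ell_eval by (simp add: sum_3 Sm_def mult.commute mult.left_commute del: times_complex.sel)

lemma ev31: "dV \<alpha> \<beta> (U s) (V s) (Sm 3 1 z ** U t) =
   (2/\<beta>) * Re (z * (cnj (a s 2 3) * r t s 2 1 + cnj (a s 1 3) * r t s 1 1))"
  unfolding ell_eval by (simp add: sum_3 Sm_def distrib_left mult.commute mult.left_commute del: times_complex.sel)

lemma ev32: "dV \<alpha> \<beta> (U s) (V s) (Sm 3 2 z ** U t) =
   (2/\<alpha>) * Re (cnj (a s 1 2) * (- cnj z * r t s 1 3)) +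
   (2/\<beta>) * Re (z * (cnj (a s 2 3) * r t s 2 2 + cnj (a s 1 3) * r t s 1 2))"
  unfolding ell_eval by (simp add: sum_3 Sm_def distrib_left mult.commute mult.left_commute del: times_complex.sel)

lemma cont12: "isCont (\<lambda>s. a s 1 2) t"
proof -
  define g where "g s = cnj (a s 1 2) * r t s 1 1" for s
  have czg: "isCont (\<lambda>s. Re (z * g s)) t" for z
  proof -
    have c: "isCont (\<lambda>s. (\<alpha>/2) * dV \<alpha> \<beta> (U s) (V s) (Sm 2 1 z ** U t)) t"
      by (intro continuous_intros ell_cont) simp
    have eq: "(\<lambda>s. (\<alpha>/2) * dV \<alpha> \<beta> (U s) (V s) (Sm 2 1 z ** U t)) = (\<lambda>s. Re (z * g s))"
      using apos unfolding ev21 g_def by (intro ext) simp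
    show ?thesis using c unfolding eq .
  qed
  have "isCont g t" using czg[of 1] czg[of \<i>] by (intro cont_from_Re) simp_all
  then show ?thesis
    by (rule cont_div_transform[OF _ r_cont[of t 1 1]]) (simp_all add: r_at g_def)
qed

lemma cont13_23: "isCont (\<lambda>s. a s 1 3) t \<and> isCont (\<lambda>s. a s 2 3) t"
proof -
  define g1 where "g1 s = cnj (a s 2 3) * r t s 2 1 + cnj (a s 1 3) * r t s 1 1" for s
  define g2 where "g2 s = cnj (a s 2 3) * r t s 2 2 + cnj (a s 1 3) * r t s 1 2" for s
  have czg1: "isCont (\<lambda>s. Re (z * g1 s)) t" for z
  proof -
    have c: "isCont (\<lambda>s. (\<beta>/2) * dV \<alpha> \<beta> (U s) (V s) (Sm 3 1 z ** U t)) t"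
      by (intro continuous_intros ell_cont) simp
    have eq: "(\<lambda>s. (\<beta>/2) * dV \<alpha> \<beta> (U s) (V s) (Sm 3 1 z ** U t)) = (\<lambda>s. Re (z * g1 s))"
      using bpos unfolding ev31 g1_def by (intro ext) simp
    show ?thesis using c unfolding eq .
  qed
  have c1: "isCont g1 t" using czg1[of 1] czg1[of \<i>] by (intro cont_from_Re) simp_all
  have czg2: "isCont (\<lambda>s. Re (z * g2 s)) t" for z
  proof -
    have h: "isCont (\<lambda>s. Re (cnj (a s 1 2) * (- cnj z * r t s 1 3))) t"
      by (intro continuous_Re continuous_mult continuous_cnj continuous_const cont12 r_cont continuous_minus)
    have c: "isCont (\<lambda>s. (\<beta>/2) * (dV \<alpha> \<beta> (U s) (V s) (Sm 3 2 z ** U t)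
        - (2/\<alpha>) * Re (cnj (a s 1 2) * (- cnj z * r t s 1 3)))) t"
      by (intro continuous_mult continuous_const continuous_diff ell_cont h) simp
    have eq: "(\<lambda>s. (\<beta>/2) * (dV \<alpha> \<beta> (U s) (V s) (Sm 3 2 z ** U t)
        - (2/\<alpha>) * Re (cnj (a s 1 2) * (- cnj z * r t s 1 3)))) = (\<lambda>s. Re (z * g2 s))"
      using bpos unfolding ev32 g2_def by (intro ext) simp
    show ?thesis using c unfolding eq .
  qed
  have c2: "isCont g2 t" using czg2[of 1] czg2[of \<i>] by (intro cont_from_Re) simp_all
  define d where "d s = r t s 1 1 * r t s 2 2 - r t s 2 1 * r t s 1 2" for s
  have dc: "isCont d t" unfolding d_def by (intro continuous_intros r_cont)
  have d1: "d t = 1" by (simp add: d_def r_at)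
  have "isCont (\<lambda>s. a s 1 3) t"
  proof (rule cont_div_transform[OF _ dc d1, where n="\<lambda>s. g1 s * r t s 2 2 - g2 s * r t s 2 1"])
    show "isCont (\<lambda>s. g1 s * r t s 2 2 - g2 s * r t s 2 1) t"
      by (intro continuous_intros c1 c2 r_cont)
    show "cnj (a s 1 3) * d s = g1 s * r t s 2 2 - g2 s * r t s 2 1" for s
      by (simp add: g1_def g2_def d_def algebra_simps)
  qed
  moreover have "isCont (\<lambda>s. a s 2 3) t"
  proof (rule cont_div_transform[OF _ dc d1, where n="\<lambda>s. g2 s * r t s 1 1 - g1 s * r t s 1 2"])
    show "isCont (\<lambda>s. g2 s * r t s 1 1 - g1 s * r t s 1 2) t"
      by (intro continuous_intros c1 c2 r_cont)
    show "cnj (a s 2 3) * d s = g2 s * r t s 1 1 - g1 s * r t s 1 2" for s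
      by (simp add: g1_def g2_def d_def algebra_simps)
  qed
  ultimately show ?thesis ..
qed

end

lemma real_prod_deriv:
  fixes P Y :: "real \<Rightarrow> real"
  assumes "isCont P t" "(Y has_real_derivative Y') (at t)" "Y t = 0"
  shows "((\<lambda>s. P s * Y s) has_real_derivative P t * Y') (at t)"
proof -
  obtain g where g: "\<forall>z. Y z - Y t = g z * (z - t)" "isCont g t" "g t = Y'"
    using assms(2) CARAT_DERIV by blast
  show ?thesis
  proof (subst CARAT_DERIV, intro exI conjI allI)
    show "P z * Y z - P t * Y t = P z * g z * (z - t)" for z
      using g(1)[rule_format, of z] assms(3) by simp
    show "isCont (\<lambda>z. P z * g z) t" using assms(1) g(2) by (intro continuous_intros)
    show "P t * g t = P t * Y'" using g(3) by simp
  qed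
qed

lemma cprod_deriv:
  fixes p y :: "real \<Rightarrow> complex"
  assumes "isCont p t" "(y has_vector_derivative y') (at t)" "y t = 0"
  shows "((\<lambda>s. Re (p s * y s)) has_real_derivative Re (p t * y')) (at t)"
proof -
  have re: "((\<lambda>s. Re (y s)) has_real_derivative Re y') (at t)"
    and im: "((\<lambda>s. Im (y s)) has_real_derivative Im y') (at t)"
    using assms(2) unfolding has_vector_derivative_complex_iff by auto
  have "((\<lambda>s. Re (p s) * Re (y s) - Im (p s) * Im (y s)) has_real_derivative
          Re (p t) * Re y' - Im (p t) * Im y') (at t)"
    by (intro DERIV_diff real_prod_deriv re im continuous_Re continuous_Im assms(1)) (simp_all add: assms(3))
  then show ?thesis by simp
qed

lemma dV_split: "dV \<alpha> \<beta> W Vv (X + Y) = dV \<alpha> \<beta> W Vv X + dV \<alpha> \<beta> W Vv Y"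
  by (simp add: dV_def cdot_add_r algebra_simps)

lemma invariance:
  assumes "adj \<Omega> = - \<Omega>"
  shows "dU \<alpha> \<beta> W Vv (W ** \<Omega>) + dV \<alpha> \<beta> W Vv (Vv ** \<Omega>) = 0"
  by (simp add: dU_def dV_def cdot_omega_anti[OF assms] algebra_simps)

context geo begin

lemma a_cont: "(i,j) \<in> {(1,2),(1,3),(2,3)} \<Longrightarrow> isCont (\<lambda>s. cnj (a s i j)) t"
  using cont12 cont13_23 by (auto intro: continuous_intros)

lemma J_deriv:
  assumes om: "adj \<Omega> = - \<Omega>"
  shows "((\<lambda>s. dV \<alpha> \<beta> (U s) (V s) (U s ** \<Omega>)) has_real_derivative 0) (at t)"
proof -
  define y where "y i j s = cdot (U s $ i) (((U s - U t) ** \<Omega>) $ j)" for i j s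
  define h where "h s = (2/\<alpha>) * Re (cnj (a s 1 2) * y 1 2 s)
     + (2/\<beta>) * (Re (cnj (a s 2 3) * y 2 3 s) + Re (cnj (a s 1 3) * y 1 3 s))" for s
  have split: "dV \<alpha> \<beta> (U s) (V s) (U s ** \<Omega>) = dV \<alpha> \<beta> (U s) (V s) (U t ** \<Omega>) + h s" for s
  proof -
    have "U s ** \<Omega> = U t ** \<Omega> + (U s - U t) ** \<Omega>" by (simp add: mm_diff_r)
    then have "dV \<alpha> \<beta> (U s) (V s) (U s ** \<Omega>) = dV \<alpha> \<beta> (U s) (V s) (U t ** \<Omega>) + dV \<alpha> \<beta> (U s) (V s) ((U s - U t) ** \<Omega>)"
      by (simp only: dV_split)
    moreover have "dV \<alpha> \<beta> (U s) (V s) ((U s - U t) ** \<Omega>) = h s"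
      by (simp add: h_def y_def dV_def a_def)
    ultimately show ?thesis by simp
  qed
  have hd: "((\<lambda>s. (U s - U t) ** \<Omega>) has_vector_derivative V t ** \<Omega>) (at t)"
  proof -
    have "((\<lambda>s. (U s - U t) ** \<Omega>) has_vector_derivative (V t - 0) ** \<Omega> + (U t - U t) ** 0) (at t)"
      by (intro hvd_matmul has_vector_derivative_diff hvd has_vector_derivative_const)
    then show ?thesis by simp
  qed
  have yd: "(y i j has_vector_derivative cdot (U t $ i) ((V t ** \<Omega>) $ j)) (at t)" for i j
  proof -
    have "(y i j has_vector_derivative cdot (V t $ i) (((U t - U t) ** \<Omega>) $ j) + cdot (U t $ i) ((V t ** \<Omega>) $ j)) (at t)"
      unfolding y_def[abs_def] by (intro hvd_cdot hvd_nth hvd hd)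
    then show ?thesis by simp
  qed
  have y0: "y i j t = 0" for i j by (simp add: y_def)
  have hderiv: "(h has_real_derivative dV \<alpha> \<beta> (U t) (V t) (V t ** \<Omega>)) (at t)"
  proof -
    have "(h has_real_derivative (2/\<alpha>) * Re (cnj (a t 1 2) * cdot (U t $ 1) ((V t ** \<Omega>) $ 2))
     + (2/\<beta>) * (Re (cnj (a t 2 3) * cdot (U t $ 2) ((V t ** \<Omega>) $ 3)) + Re (cnj (a t 1 3) * cdot (U t $ 1) ((V t ** \<Omega>) $ 3)))) (at t)"
      unfolding h_def[abs_def]
      by (intro DERIV_add DERIV_cmult cprod_deriv a_cont yd y0) auto
    then show ?thesis by (simp add: dV_def a_def)
  qed
  have "((\<lambda>s. dV \<alpha> \<beta> (U s) (V s) (U t ** \<Omega>) + h s) has_real_derivative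
      dU \<alpha> \<beta> (U t) (V t) (U t ** \<Omega>) + dV \<alpha> \<beta> (U t) (V t) (V t ** \<Omega>)) (at t)"
    by (intro DERIV_add EL tangent_Omega om hderiv)
  then show ?thesis unfolding split invariance[OF om] .
qed

lemma J_const:
  assumes om: "adj \<Omega> = - \<Omega>"
  shows "dV \<alpha> \<beta> (U s) (V s) (U s ** \<Omega>) = dV \<alpha> \<beta> (U 0) (V 0) (U 0 ** \<Omega>)"
  using DERIV_isconst_all[of "\<lambda>s. dV \<alpha> \<beta> (U s) (V s) (U s ** \<Omega>)"] J_deriv[OF om] by blast

end

lemma sum_mult_delta: "(\<Sum>j\<in>(UNIV::'n::finite set). f j * (if j = l then c else 0)) = f l * (c::'a::semiring_1)"
proof -
  have "(\<Sum>j\<in>UNIV. f j * (if j = l then c else 0)) = (\<Sum>j\<in>UNIV. if j = l then f j * c else 0)"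
    by (rule sum.cong) simp_all
  then show ?thesis by simp
qed

definition Emat :: "'a::zero \<Rightarrow> 'n \<Rightarrow> 'n \<Rightarrow> 'a^'n^'n" where
  "Emat c p q = (\<chi> i j. if i = p \<and> j = q then c else 0)"

lemma trace_E: "trace (A ** Emat c l k) = A $ k $ l * (c::'a::comm_semiring_1)"
proof -
  have e: "(A ** Emat c l k) $ i $ i = (if i = k then A $ i $ l * c else 0)" for i
  proof (cases "i = k")
    case True
    then show ?thesis unfolding matrix_matrix_mult_def Emat_def by (simp add: sum_mult_delta)
  next
    case False
    then show ?thesis unfolding matrix_matrix_mult_def Emat_def by simp
  qed
  show ?thesis unfolding trace_def e by simp
qed

lemma adj_Emat: "adj (Emat c p q) = Emat (cnj c) q p"
  unfolding Emat_def by (simp add: vec_eq_iff)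

lemma Emat_minus: "Emat (- c) p q = - Emat (c::'a::ab_group_add) p q"
  unfolding Emat_def by (simp add: vec_eq_iff)

lemma trace_ext:
  fixes A B :: "complex^'n^'n"
  assumes "\<And>\<Omega>. adj \<Omega> = - \<Omega> \<Longrightarrow> trace (A ** \<Omega>) = trace (B ** \<Omega>)"
  shows "A = B"
proof -
  have "A $ k $ l = B $ k $ l" for k l
  proof -
    define O1 :: "complex^'n^'n" where "O1 = Emat 1 l k - Emat 1 k l"
    define O2 :: "complex^'n^'n" where "O2 = Emat \<i> l k + Emat \<i> k l"
    have a1: "adj O1 = - O1" unfolding O1_def adj_diff adj_Emat by simp
    have a2: "adj O2 = - O2" unfolding O2_def adj_add adj_Emat by (simp add: Emat_minus)
    have t1: "trace (M ** O1) = M $ k $ l - M $ l $ k" for M :: "complex^'n^'n"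
      unfolding O1_def mm_diff_l trace_sub trace_E by simp
    have t2: "trace (M ** O2) = \<i> * (M $ k $ l + M $ l $ k)" for M :: "complex^'n^'n"
      unfolding O2_def mm_add_l trace_add trace_E by (simp add: algebra_simps)
    have m: "M $ k $ l = (trace (M ** O1) - \<i> * trace (M ** O2)) / 2" for M :: "complex^'n^'n"
      unfolding t1 t2 by (simp add: algebra_simps)
    have "A $ k $ l = (trace (A ** O1) - \<i> * trace (A ** O2)) / 2" by (rule m)
    also have "\<dots> = (trace (B ** O1) - \<i> * trace (B ** O2)) / 2"
      by (simp only: assms[OF a1] assms[OF a2])
    also have "\<dots> = B $ k $ l" by (rule m[symmetric])
    finally show ?thesis .
  qed
  then show ?thesis by (simp add: vec_eq_iff)
qed


definition PmOf :: "real \<Rightarrow> real \<Rightarrow> (3 \<Rightarrow> 3 \<Rightarrow> complex) \<Rightarrow> complex^3^3" where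
  "PmOf \<alpha> \<beta> A = mat3 0 (cnj (A 1 2) / of_real \<alpha>) (cnj (A 1 3) / of_real \<beta>)
       (- A 1 2 / of_real \<alpha>) 0 (cnj (A 2 3) / of_real \<beta>)
       (- A 1 3 / of_real \<beta>) (- A 2 3 / of_real \<beta>) 0"

lemma mat3_nth: "mat3 a11 a12 a13 a21 a22 a23 a31 a32 a33 $ i $ j =
  (if i = 1 then (if j = 1 then a11 else if j = 2 then a12 else a13)
     else if i = 2 then (if j = 1 then a21 else if j = 2 then a22 else a23)
     else (if j = 1 then a31 else if j = 2 then a32 else a33))"
  by (simp add: mat3_def)

lemma PmOf_anti: "adj (PmOf \<alpha> \<beta> A) = - PmOf \<alpha> \<beta> A"
  unfolding vec_eq_iff forall_3 PmOf_def by (simp add: mat3_nth)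

lemma trace_adj: "trace (adj A) = cnj (trace A)"
  by (simp add: trace_def)

lemma trace_real:
  assumes "adj A = - A" "adj B = - B"
  shows "trace (A ** B) = of_real (Re (trace (A ** B)))"
proof -
  have "cnj (trace (A ** B)) = trace (adj (A ** B))" by (simp add: trace_adj)
  also have "\<dots> = trace (B ** A)" by (simp add: adj_mult assms mm_minus_l mm_minus_r)
  also have "\<dots> = trace (A ** B)" by (rule trace_mul_sym)
  finally have cc: "cnj (trace (A ** B)) = trace (A ** B)" .
  have "Im (trace (A ** B)) = 0" using arg_cong[OF cc, of Im] by simp
  then show ?thesis by (simp add: complex_eq_iff)
qed

lemma adj_conj_anti: "adj \<Omega> = - \<Omega> \<Longrightarrow> adj (W ** \<Omega> ** adj W) = - (W ** \<Omega> ** adj W)"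
  by (simp add: adj_mult mm_minus_l mm_minus_r matrix_mul_assoc)

lemma dV_trace:
  assumes om: "adj \<Omega> = - \<Omega>"
  shows "dV \<alpha> \<beta> W Vv (W ** \<Omega>) = Re (trace (PmOf \<alpha> \<beta> (\<lambda>i j. cdot (W$i) (Vv$j)) ** (W ** \<Omega> ** adj W)))"
proof -
  define X where "X = W ** \<Omega> ** adj W"
  have ax: "adj X = - X" unfolding X_def by (rule adj_conj_anti[OF om])
  have xe: "X $ i $ j = - cnj (X $ j $ i)" for i j
    using arg_cong[OF ax, of "\<lambda>M. M $ i $ j"] by simp
  have c: "cdot (W $ i) ((W ** \<Omega>) $ j) = X $ j $ i" for i j unfolding X_def by (rule cdot_right_mm)
  have tr: "trace (PmOf \<alpha> \<beta> A ** X) =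
     (cnj (A 1 2) / of_real \<alpha> * X $ 2 $ 1 + (- A 1 2 / of_real \<alpha>) * X $ 1 $ 2)
   + (cnj (A 1 3) / of_real \<beta> * X $ 3 $ 1 + (- A 1 3 / of_real \<beta>) * X $ 1 $ 3)
   + (cnj (A 2 3) / of_real \<beta> * X $ 3 $ 2 + (- A 2 3 / of_real \<beta>) * X $ 2 $ 3)" for A
    unfolding trace_def matrix_matrix_mult_def PmOf_def by (simp add: sum_3 mat3_nth)
  have re: "Re (cnj p / of_real c * x + (- p / of_real c) * (- cnj x)) = (2/c) * Re (cnj p * x)"
    for p x :: complex and c :: real
    by (cases "c = 0") (simp_all add: Re_divide field_simps power2_eq_square)
  have re2: "Re (cnj x * y) = Re (x * cnj y)" for x y :: complex by simp
  show ?thesis unfolding X_def[symmetric] dV_def c tr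
    unfolding xe[of 1 2] xe[of 1 3] xe[of 2 3] re
    by (simp del: times_complex.sel add: re2 add_divide_distrib)
qed


context geo begin

definition Pm where "Pm s = PmOf \<alpha> \<beta> (a s)"
definition N where "N s = adj (U s) ** Pm s ** U s"

lemma Pm_anti: "adj (Pm s) = - Pm s" unfolding Pm_def by (rule PmOf_anti)

lemma N_anti: "adj (N s) = - N s"
  unfolding N_def by (simp add: adj_mult Pm_anti mm_minus_l mm_minus_r matrix_mul_assoc)

lemma J_trace:
  assumes om: "adj \<Omega> = - \<Omega>"
  shows "dV \<alpha> \<beta> (U s) (V s) (U s ** \<Omega>) = Re (trace (N s ** \<Omega>))"
proof -
  have "dV \<alpha> \<beta> (U s) (V s) (U s ** \<Omega>) = Re (trace (Pm s ** (U s ** \<Omega> ** adj (U s))))"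
    unfolding dV_trace[OF om] Pm_def a_def[abs_def] ..
  also have "trace (Pm s ** (U s ** \<Omega> ** adj (U s))) = trace (adj (U s) ** (Pm s ** (U s ** \<Omega>)))"
    by (simp add: matrix_mul_assoc trace_mul_sym[of _ "adj (U s)"])
  also have "\<dots> = trace (N s ** \<Omega>)" by (simp add: N_def matrix_mul_assoc)
  finally show ?thesis .
qed

lemma N_const: "N s = N 0"
proof (rule trace_ext)
  fix \<Omega> :: "complex^3^3" assume om: "adj \<Omega> = - \<Omega>"
  have "Re (trace (N s ** \<Omega>)) = Re (trace (N 0 ** \<Omega>))"
    using J_const[OF om, of s] unfolding J_trace[OF om] .
  then show "trace (N s ** \<Omega>) = trace (N 0 ** \<Omega>)"
    using trace_real[OF N_anti om, of s] trace_real[OF N_anti om, of 0] by metis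
qed

lemma Pm_eq: "Pm s = U s ** N 0 ** adj (U s)"
proof -
  have "U s ** N 0 ** adj (U s) = U s ** N s ** adj (U s)" using N_const[of s] by simp
  also have "\<dots> = (U s ** adj (U s)) ** Pm s ** (U s ** adj (U s))"
    unfolding N_def by (simp add: matrix_mul_assoc)
  finally have "U s ** N 0 ** adj (U s) = (U s ** adj (U s)) ** Pm s ** (U s ** adj (U s))" .
  then show ?thesis by (simp add: unit1)
qed

end

definition Pb :: "complex^3^3 \<Rightarrow> complex^3^3" where
  "Pb P = (\<chi> i j. if i \<noteq> 3 \<and> j \<noteq> 3 then P $ i $ j else 0)"

definition blockdiag0 :: "complex^2^2 \<Rightarrow> complex^3^3" where
  "blockdiag0 E = (\<chi> i j. if i = 3 \<or> j = 3 then 0 else E $ idx32 i $ idx32 j)"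

lemma cscale: "(r::real) *\<^sub>R (z::complex) = of_real r * z" by (simp add: scaleR_conv_of_real)

lemma blockdiag_deriv:
  assumes "(E has_vector_derivative E') (at s)"
  shows "((\<lambda>s. blockdiag21 (E s)) has_vector_derivative blockdiag0 E') (at s)"
proof (rule mat_hvd)
  fix i j :: 3
  show "((\<lambda>s. blockdiag21 (E s) $ i $ j) has_vector_derivative blockdiag0 E' $ i $ j) (at s)"
  proof (cases "i = 3 \<or> j = 3")
    case True
    then show ?thesis by (simp add: blockdiag21_def blockdiag0_def has_vector_derivative_const)
  next
    case False
    then show ?thesis by (simp add: blockdiag21_def blockdiag0_def hvd_nth2 assms)
  qed
qed

lemma idx32_simps[simp]: "idx32 1 = 1" "idx32 2 = 2" by (simp_all add: idx32_def)

lemma blockdiag0_mult: "blockdiag0 (c *\<^sub>R N ** E) = c *\<^sub>R (blockdiag0 N ** blockdiag21 E)"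
  unfolding vec_eq_iff forall_3
  by (simp add: blockdiag0_def blockdiag21_def matrix_matrix_mult_def sum_3 sum_2 cscale algebra_simps)

lemma blockdiag21_one: "blockdiag21 (mat 1) = mat 1"
  unfolding vec_eq_iff forall_3 by (simp add: blockdiag21_def mat_def)

context geo begin

lemma Pm_fun: "Pm = (\<lambda>s. U s ** N 0 ** adj (U s))"
  using Pm_eq by auto

lemma Pm_deriv: "(Pm has_vector_derivative K s ** Pm s - Pm s ** K s) (at s)"
proof -
  have "((\<lambda>s. U s ** N 0 ** adj (U s)) has_vector_derivative
     (V s ** N 0 + U s ** 0) ** adj (U s) + U s ** N 0 ** adj (V s)) (at s)"
    by (intro hvd_matmul hvd_adj hvd has_vector_derivative_const)
  moreover have "(V s ** N 0 + U s ** 0) ** adj (U s) + U s ** N 0 ** adj (V s)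
       = K s ** Pm s - Pm s ** K s"
    unfolding Pm_eq[of s] V_eq adj_mult K_anti
    by (simp add: matrix_mul_assoc mm_minus_l mm_minus_r)
  ultimately show ?thesis unfolding Pm_fun[symmetric] by simp
qed

lemma Pm_nth: "Pm s = mat3 0 (cnj (a s 1 2) / of_real \<alpha>) (cnj (a s 1 3) / of_real \<beta>)
       (- a s 1 2 / of_real \<alpha>) 0 (cnj (a s 2 3) / of_real \<beta>)
       (- a s 1 3 / of_real \<beta>) (- a s 2 3 / of_real \<beta>) 0"
  unfolding Pm_def PmOf_def ..

lemma K_Pm: "K s = (- \<beta>) *\<^sub>R Pm s - (\<alpha> - \<beta>) *\<^sub>R Pb (Pm s)"
proof -
  have an: "\<alpha> \<noteq> 0" "\<beta> \<noteq> 0" using apos bpos by auto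
  show ?thesis
    unfolding vec_eq_iff forall_3 using an
    by (simp add: K_def Pm_nth mat3_nth Pb_def gaugeV a_anti'[of s 1 2] a_anti'[of s 1 3]
        a_anti'[of s 2 3] cscale field_simps)
qed

lemma comm12: "(K s ** Pm s - Pm s ** K s) $ 1 $ 2 = 0" "(K s ** Pm s - Pm s ** K s) $ 2 $ 1 = 0"
  unfolding K_Pm
  by (simp_all add: matrix_matrix_mult_def sum_3 Pm_nth mat3_nth Pb_def algebra_simps)

lemma Pb_const: "Pb (Pm s) = Pb (Pm 0)"
proof -
  have c: "Pm s $ i $ j = Pm 0 $ i $ j" if "(i,j) \<in> {(1,2),(2,1)}" for i j
  proof (rule deriv0_const[where f="\<lambda>s. Pm s $ i $ j"])
    fix t show "((\<lambda>s. Pm s $ i $ j) has_vector_derivative 0) (at t)"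
      using hvd_nth2[OF Pm_deriv[of t], of i j] comm12[of t] that by auto
  qed
  show ?thesis unfolding vec_eq_iff forall_3 Pb_def
    using c[of 1 2] c[of 2 1] by (simp add: Pm_nth mat3_nth)
qed

end

lemma mat2_nth: "mat2 a b c d $ i $ j = (if i = 1 then (if j = 1 then a else b) else (if j = 1 then c else d))"
  by (simp add: mat2_def)

context geo begin

definition N2 where "N2 = mat2 0 (a 0 2 1 / of_real \<alpha>) (- cnj (a 0 2 1) / of_real \<alpha>) 0"
definition B where "B = - Pb (Pm 0)"
definition G where "G s = blockdiag21 (mat_exp (((\<alpha> - \<beta>) * s) *\<^sub>R N2))" for s
definition M where "M = mat3 0 (a 0 2 1 / of_real \<alpha>) (a 0 3 1 / of_real \<beta>)
                      (- cnj (a 0 2 1) / of_real \<alpha>) 0 (a 0 3 2 / of_real \<beta>)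
                      (- cnj (a 0 3 1) / of_real \<beta>) (- cnj (a 0 3 2) / of_real \<beta>) 0"
definition E where "E s = mat_exp ((\<beta> * s) *\<^sub>R M)" for s
definition C where "C s = G s ** E s ** U 0" for s

lemma B_eq: "blockdiag0 N2 = B"
  unfolding vec_eq_iff forall_3 B_def N2_def
  by (simp add: blockdiag0_def mat2_nth Pb_def Pm_nth mat3_nth a_anti[of 0 2 1])

lemma B_anti: "adj B = - B"
  unfolding vec_eq_iff forall_3 B_def
  by (simp add: Pb_def Pm_nth mat3_nth)

lemma M_eq: "M = - Pm 0"
  unfolding vec_eq_iff forall_3 M_def
  by (simp add: Pm_nth mat3_nth a_anti[of 0 2 1] a_anti[of 0 3 1] a_anti[of 0 3 2])

lemma K_B: "K s = (- \<beta>) *\<^sub>R Pm s + (\<alpha> - \<beta>) *\<^sub>R B"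
  unfolding K_Pm Pb_const[of s] B_def by (simp add: algebra_simps)

lemma comm_B: "K s ** Pm s - Pm s ** K s = (\<alpha> - \<beta>) *\<^sub>R (B ** Pm s - Pm s ** B)"
  unfolding K_B by (simp add: mm_simps algebra_simps)

lemma G_deriv: "(G has_vector_derivative (\<alpha> - \<beta>) *\<^sub>R (B ** G s)) (at s)"
proof -
  have "(G has_vector_derivative blockdiag0 ((\<alpha> - \<beta>) *\<^sub>R N2 ** mat_exp (((\<alpha> - \<beta>) * s) *\<^sub>R N2))) (at s)"
    unfolding G_def[abs_def] by (intro blockdiag_deriv mat_exp_deriv')
  then show ?thesis unfolding blockdiag0_mult B_eq G_def .
qed

lemma G0: "G 0 = mat 1"
  by (simp add: G_def mat_exp_zero blockdiag21_one)

lemma GG: "adj (G s) ** G s = mat 1"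
proof -
  have d: "((\<lambda>s. adj (G s) ** G s) has_vector_derivative 0) (at t)" for t
  proof -
    have "((\<lambda>s. adj (G s) ** G s) has_vector_derivative
        adj ((\<alpha> - \<beta>) *\<^sub>R (B ** G t)) ** G t + adj (G t) ** ((\<alpha> - \<beta>) *\<^sub>R (B ** G t))) (at t)"
      by (intro hvd_matmul hvd_adj G_deriv)
    then show ?thesis by (simp add: mm_simps B_anti matrix_mul_assoc)
  qed
  have "adj (G s) ** G s = adj (G 0) ** G 0" by (rule deriv0_const[where f="\<lambda>s. adj (G s) ** G s", OF d])
  then show ?thesis by (simp add: G0)
qed

lemma GG2: "G s ** adj (G s) = mat 1"
  using GG matrix_left_right_inverse by blast

lemma GGx: "X ** adj (G s) ** G s = X"
  by (simp add: matrix_mul_assoc[symmetric] GG)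

lemma GGx2: "X ** G s ** adj (G s) = X"
  by (simp add: matrix_mul_assoc[symmetric] GG2)

lemma Y_const: "adj (G s) ** Pm s ** G s = Pm 0"
proof -
  have d: "((\<lambda>s. adj (G s) ** Pm s ** G s) has_vector_derivative 0) (at t)" for t
  proof -
    have "((\<lambda>s. adj (G s) ** Pm s ** G s) has_vector_derivative
        (adj ((\<alpha> - \<beta>) *\<^sub>R (B ** G t)) ** Pm t + adj (G t) ** (K t ** Pm t - Pm t ** K t)) ** G t
          + adj (G t) ** Pm t ** ((\<alpha> - \<beta>) *\<^sub>R (B ** G t))) (at t)"
      by (intro hvd_matmul hvd_adj G_deriv Pm_deriv)
    moreover have "(adj ((\<alpha> - \<beta>) *\<^sub>R (B ** G t)) ** Pm t + adj (G t) ** ((\<alpha> - \<beta>) *\<^sub>R (B ** Pm t - Pm t ** B))) ** G t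
          + adj (G t) ** Pm t ** ((\<alpha> - \<beta>) *\<^sub>R (B ** G t)) = 0"
      apply (simp only: mm_simps B_anti matrix_mul_assoc)
      apply (simp only: scaleR_minus_right scaleR_right_diff_distrib)
      by (simp add: algebra_simps)
    ultimately show ?thesis unfolding comm_B by simp
  qed
  have "adj (G s) ** Pm s ** G s = adj (G 0) ** Pm 0 ** G 0"
    by (rule deriv0_const[where f="\<lambda>s. adj (G s) ** Pm s ** G s", OF d])
  then show ?thesis by (simp add: G0)
qed

lemma Pm_G: "Pm s = G s ** Pm 0 ** adj (G s)"
proof -
  have "G s ** Pm 0 ** adj (G s) = G s ** (adj (G s) ** Pm s ** G s) ** adj (G s)"
    by (simp add: Y_const)
  also have "\<dots> = Pm s" by (simp add: matrix_mul_assoc GGx2 GG2)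
  finally show ?thesis by simp
qed

lemma E_deriv: "(E has_vector_derivative (\<beta> *\<^sub>R M) ** E s) (at s)"
  unfolding E_def[abs_def] by (rule mat_exp_deriv')

lemma E0: "E 0 = mat 1" by (simp add: E_def mat_exp_zero)

lemma C0: "C 0 = U 0" by (simp add: C_def G0 E0)

lemma C_deriv: "(C has_vector_derivative K s ** C s) (at s)"
proof -
  have "(C has_vector_derivative ((\<alpha> - \<beta>) *\<^sub>R (B ** G s) ** E s + G s ** ((\<beta> *\<^sub>R M) ** E s)) ** U 0
      + G s ** E s ** 0) (at s)"
    unfolding C_def[abs_def] by (intro hvd_matmul G_deriv E_deriv has_vector_derivative_const)
  moreover have "((\<alpha> - \<beta>) *\<^sub>R (B ** G s) ** E s + G s ** ((\<beta> *\<^sub>R M) ** E s)) ** U 0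
      + G s ** E s ** 0 = K s ** C s"
  proof -
    have e1: "((\<alpha> - \<beta>) *\<^sub>R (B ** G s) ** E s + G s ** ((\<beta> *\<^sub>R M) ** E s)) ** U 0 + G s ** E s ** 0
       = (\<alpha> - \<beta>) *\<^sub>R (B ** G s ** E s ** U 0) + \<beta> *\<^sub>R (G s ** M ** E s ** U 0)"
      by (simp only: mm_simps matrix_mul_assoc mm_zero_r add_0_right)
    have e2: "Pm s ** G s = - (G s ** M)"
      unfolding Pm_G[of s] GGx M_eq mm_minus_l by simp
    have e3: "K s ** C s = (- \<beta>) *\<^sub>R (Pm s ** G s ** E s ** U 0) + (\<alpha> - \<beta>) *\<^sub>R (B ** G s ** E s ** U 0)"
      unfolding K_B C_def by (simp only: mm_simps matrix_mul_assoc)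
    show ?thesis unfolding e1 e3 e2 by (simp add: mm_minus_r)
  qed
  ultimately show ?thesis by simp
qed

lemma C_unit: "adj (C s) ** C s = mat 1"
proof -
  have d: "((\<lambda>s. adj (C s) ** C s) has_vector_derivative 0) (at t)" for t
  proof -
    have "((\<lambda>s. adj (C s) ** C s) has_vector_derivative adj (K t ** C t) ** C t + adj (C t) ** (K t ** C t)) (at t)"
      by (intro hvd_matmul hvd_adj C_deriv)
    then show ?thesis by (simp add: mm_simps K_anti matrix_mul_assoc)
  qed
  have "adj (C s) ** C s = adj (C 0) ** C 0" by (rule deriv0_const[where f="\<lambda>s. adj (C s) ** C s", OF d])
  then show ?thesis by (simp add: C0 unit2)
qed

lemma Z_const: "adj (C s) ** U s = mat 1"
proof -
  have d: "((\<lambda>s. adj (C s) ** U s) has_vector_derivative 0) (at t)" for t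
  proof -
    have "((\<lambda>s. adj (C s) ** U s) has_vector_derivative adj (K t ** C t) ** U t + adj (C t) ** V t) (at t)"
      by (intro hvd_matmul hvd_adj C_deriv hvd)
    then show ?thesis by (simp add: mm_simps K_anti matrix_mul_assoc V_eq)
  qed
  have "adj (C s) ** U s = adj (C 0) ** U 0" by (rule deriv0_const[where f="\<lambda>s. adj (C s) ** U s", OF d])
  then show ?thesis by (simp add: C0 unit2)
qed

lemma U_eq_C: "U s = C s"
proof -
  have "C s ** adj (C s) = mat 1" using C_unit matrix_left_right_inverse by blast
  then have "U s = C s ** (adj (C s) ** U s)" by (simp add: matrix_mul_assoc)
  then show ?thesis by (simp add: Z_const)
qed

end

theorem proposition5:
  fixes \<alpha> \<beta> :: real and U :: "real \<Rightarrow> complex^3^3"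
  assumes "\<alpha> > 0" and "\<beta> > 0"
    and "geodesic_eq \<alpha> \<beta> U"
    and "gauge_fixed U"
  shows "let A0 = (\<lambda>i j. cdot (U 0 $ i) (vector_derivative U (at 0) $ j));
             G = (\<lambda>t. blockdiag21 (mat_exp (((\<alpha> - \<beta>) * t) *\<^sub>R
                    mat2 0 (A0 2 1 / of_real \<alpha>) (- cnj (A0 2 1) / of_real \<alpha>) 0)));
             M = mat3 0 (A0 2 1 / of_real \<alpha>) (A0 3 1 / of_real \<beta>)
                      (- cnj (A0 2 1) / of_real \<alpha>) 0 (A0 3 2 / of_real \<beta>)
                      (- cnj (A0 3 1) / of_real \<beta>) (- cnj (A0 3 2) / of_real \<beta>) 0
         in \<forall>t. U t = G t ** mat_exp ((\<beta> * t) *\<^sub>R M) ** U 0"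
proof -
  interpret geo \<alpha> \<beta> U using assms by unfold_locales
  have A0: "(\<lambda>i j. cdot (U 0 $ i) (vector_derivative U (at 0) $ j)) = a 0"
    by (intro ext) (simp add: a_def V_def)
  show ?thesis unfolding Let_def A0
  proof
    fix t
    show "U t = blockdiag21 (mat_exp (((\<alpha> - \<beta>) * t) *\<^sub>R
                    mat2 0 (a 0 2 1 / of_real \<alpha>) (- cnj (a 0 2 1) / of_real \<alpha>) 0)) **
          mat_exp ((\<beta> * t) *\<^sub>R mat3 0 (a 0 2 1 / of_real \<alpha>) (a 0 3 1 / of_real \<beta>)
                      (- cnj (a 0 2 1) / of_real \<alpha>) 0 (a 0 3 2 / of_real \<beta>)
                      (- cnj (a 0 3 1) / of_real \<beta>) (- cnj (a 0 3 2) / of_real \<beta>) 0) ** U 0"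
      using U_eq_C[of t] by (simp add: C_def G_def E_def M_def N2_def)
  qed
qed


end
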